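(* Let $\mathcal{Q}=(Q,\leq^Q)$ with $Q=\{1,\dots,k\}$ and $\mathcal{P}=(P,\leq^P)$ be finite posets, let $(C_1,\dots,C_w)$ be any chain partition of $\mathcal{P}$, and let $f:Q\to\{1,\dots,w\}$ be arbitrary. Let $G=G(\mathcal{P},\mathcal{Q},f)$ be the graph whose vertex set is a disjoint union $V_1\,\dot\cup\cdots\dot\cup\, V_k$ where $V_i$ is a copy of $C_{f(i)}$, and where for $p\in V_i$, $q\in V_j$ being copies of $p'\in C_{f(i)}$, $q'\in C_{f(j)}$, we have $pq\in E(G)$ iff $i\neq j$ and both ($p'\leq^P q'$ iff $i\leq^Q j$) and ($p'\geq^P q'$ iff $i\geq^Q j$). Then $G$, with the colour classes $V_1,\dots,V_k$, contains a clique of size $|Q|$ if and only if $\mathcal{Q}$ has an embedding $e$ into $\mathcal{P}$ compatible with $f$ (i.e., $e(q)\in C_{f(q)}$ for all $q\in Q$).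
   Context: A chain partition of $\mathcal{P}$ is a partition of $P$ into chains (sets of pairwise comparable elements). An embedding from $\mathcal{Q}$ into $\mathcal{P}$ is an injective function $e:Q\to P$ such that $q\leq^Q q'$ iff $e(q)\leq^P e(q')$ for all $q,q'\in Q$. A clique is a set of pairwise adjacent vertices. *)

theory Defs
  imports Main
begin

definition is_chain :: "('a \<times> 'a) set \<Rightarrow> 'a set \<Rightarrow> bool" where
  "is_chain leP C \<longleftrightarrow> (\<forall>x\<in>C. \<forall>y\<in>C. (x, y) \<in> leP \<or> (y, x) \<in> leP)"

definition chain_partition ::
  "'a set \<Rightarrow> ('a \<times> 'a) set \<Rightarrow> nat \<Rightarrow> (nat \<Rightarrow> 'a set) \<Rightarrow> bool" where
  "chain_partition P leP w C \<longleftrightarrow>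
     (\<Union>i\<in>{1..w}. C i) = P \<and>
     (\<forall>i\<in>{1..w}. C i \<noteq> {} \<and> is_chain leP (C i)) \<and>
     (\<forall>i\<in>{1..w}. \<forall>j\<in>{1..w}. i \<noteq> j \<longrightarrow> C i \<inter> C j = {})"

definition G_vertices :: "nat \<Rightarrow> (nat \<Rightarrow> 'a set) \<Rightarrow> (nat \<Rightarrow> nat) \<Rightarrow> (nat \<times> 'a) set" where
  "G_vertices k C f = (SIGMA i:{1..k}. C (f i))"

definition G_adj ::
  "('a \<times> 'a) set \<Rightarrow> (nat \<times> nat) set \<Rightarrow> nat \<times> 'a \<Rightarrow> nat \<times> 'a \<Rightarrow> bool" where
  "G_adj leP leQ u v \<longleftrightarrow>
     (case u of (i, p) \<Rightarrow> case v of (j, q) \<Rightarrow>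
       i \<noteq> j \<and> (((p, q) \<in> leP) \<longleftrightarrow> ((i, j) \<in> leQ))
             \<and> (((q, p) \<in> leP) \<longleftrightarrow> ((j, i) \<in> leQ)))"

definition is_clique :: "('v \<Rightarrow> 'v \<Rightarrow> bool) \<Rightarrow> 'v set \<Rightarrow> 'v set \<Rightarrow> bool" where
  "is_clique E V K \<longleftrightarrow> K \<subseteq> V \<and> (\<forall>u\<in>K. \<forall>v\<in>K. u \<noteq> v \<longrightarrow> E u v)"

definition is_embedding ::
  "'q set \<Rightarrow> ('q \<times> 'q) set \<Rightarrow> 'a set \<Rightarrow> ('a \<times> 'a) set \<Rightarrow> ('q \<Rightarrow> 'a) \<Rightarrow> bool" where
  "is_embedding Q leQ P leP e \<longleftrightarrow>
     e ` Q \<subseteq> P \<and> inj_on e Q \<and>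
     (\<forall>q\<in>Q. \<forall>q'\<in>Q. (q, q') \<in> leQ \<longleftrightarrow> (e q, e q') \<in> leP)"

end

theory Submission
  imports Defs
begin

theorem proposition4p1:
  fixes k w :: nat and leQ :: "(nat \<times> nat) set"
    and P :: "'a set" and leP :: "('a \<times> 'a) set"
    and C :: "nat \<Rightarrow> 'a set" and f :: "nat \<Rightarrow> nat"
  assumes "partial_order_on {1..k} leQ"
    and "finite P" and "partial_order_on P leP"
    and "chain_partition P leP w C"
    and "\<forall>i\<in>{1..k}. f i \<in> {1..w}"
  shows "(\<exists>K. is_clique (G_adj leP leQ) (G_vertices k C f) K \<and> card K = k)
     \<longleftrightarrow> (\<exists>e. is_embedding {1..k} leQ P leP e \<and> (\<forall>q\<in>{1..k}. e q \<in> C (f q)))"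
proof
  have CP: "\<And>i. i \<in> {1..k} \<Longrightarrow> C (f i) \<subseteq> P"
    using assms(4,5) unfolding chain_partition_def by blast
  have reflQ: "\<And>i. i \<in> {1..k} \<Longrightarrow> (i,i) \<in> leQ" and antiQ: "antisym leQ"
    using assms(1) unfolding partial_order_on_def preorder_on_def refl_on_def by auto
  have reflP: "\<And>x. x \<in> P \<Longrightarrow> (x,x) \<in> leP"
    using assms(3) unfolding partial_order_on_def preorder_on_def refl_on_def by auto
  have finV: "finite (G_vertices k C f)"
    unfolding G_vertices_def using CP assms(2) by (intro finite_SigmaI) (auto intro: finite_subset)
  {
    assume "\<exists>K. is_clique (G_adj leP leQ) (G_vertices k C f) K \<and> card K = k"
    then obtain K where cl: "is_clique (G_adj leP leQ) (G_vertices k C f) K" and ck: "card K = k" by blast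
    have KV: "K \<subseteq> G_vertices k C f" and adj: "\<And>u v. u \<in> K \<Longrightarrow> v \<in> K \<Longrightarrow> u \<noteq> v \<Longrightarrow> G_adj leP leQ u v"
      using cl unfolding is_clique_def by auto
    have finK: "finite K" using finV KV finite_subset by blast
    have injfst: "inj_on fst K"
    proof (rule inj_onI)
      fix u v assume "u \<in> K" "v \<in> K" "fst u = fst v"
      then show "u = v" using adj[of u v] unfolding G_adj_def by (cases u; cases v) auto
    qed
    have sub: "fst ` K \<subseteq> {1..k}" using KV unfolding G_vertices_def by auto
    have "card (fst ` K) = k" using card_image[OF injfst] ck by simp
    hence imgK: "fst ` K = {1..k}"
      using sub by (intro card_subset_eq) auto
    define e where "e i = snd (THE u. u \<in> K \<and> fst u = i)" for i
    have eK: "(i, e i) \<in> K" if "i \<in> {1..k}" for i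
    proof -
      have "i \<in> fst ` K" using imgK that by simp
      then obtain u where u: "u \<in> K" "fst u = i" by force
      have "(THE u. u \<in> K \<and> fst u = i) = u"
        using u injfst by (intro the_equality) (auto simp: inj_on_def)
      then show ?thesis using u unfolding e_def by (cases u) auto
    qed
    have eC: "e i \<in> C (f i)" if "i \<in> {1..k}" for i
      using eK[OF that] KV unfolding G_vertices_def by auto
    have eP: "e i \<in> P" if "i \<in> {1..k}" for i using eC[OF that] CP[OF that] by blast
    have rel: "(i, j) \<in> leQ \<longleftrightarrow> (e i, e j) \<in> leP" if "i \<in> {1..k}" "j \<in> {1..k}" for i j
    proof (cases "i = j")
      case True then show ?thesis using reflQ reflP eP that by auto
    next
      case False
      then have "G_adj leP leQ (i, e i) (j, e j)" using adj eK that by auto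
      then show ?thesis unfolding G_adj_def by auto
    qed
    have "inj_on e {1..k}"
    proof (rule inj_onI)
      fix i j assume ij: "i \<in> {1..k}" "j \<in> {1..k}" "e i = e j"
      then have "(i,j) \<in> leQ" "(j,i) \<in> leQ" using rel reflP eP by auto
      then show "i = j" using antiQ by (auto dest: antisymD)
    qed
    then show "\<exists>e. is_embedding {1..k} leQ P leP e \<and> (\<forall>q\<in>{1..k}. e q \<in> C (f q))"
      using eP rel eC unfolding is_embedding_def by (intro exI[of _ e]) blast
  }
  {
    assume "\<exists>e. is_embedding {1..k} leQ P leP e \<and> (\<forall>q\<in>{1..k}. e q \<in> C (f q))"
    then obtain e where em: "is_embedding {1..k} leQ P leP e" and eC: "\<forall>q\<in>{1..k}. e q \<in> C (f q)" by blast
    define K where "K = (\<lambda>i. (i, e i)) ` {1..k}"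
    have "card K = k" unfolding K_def by (subst card_image) (auto simp: inj_on_def)
    moreover have "is_clique (G_adj leP leQ) (G_vertices k C f) K"
      using em eC unfolding is_clique_def K_def G_vertices_def G_adj_def is_embedding_def by auto
    ultimately show "\<exists>K. is_clique (G_adj leP leQ) (G_vertices k C f) K \<and> card K = k" by blast
  }
qed

end
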